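(* Let $n \geq 1$ and fix integers $\lambda_2 \geq \lambda_3 \geq \cdots \geq \lambda_n \geq 0$. For integers $\lambda_1 \geq \lambda_2$ let $\lambda = (\lambda_1, \lambda_2, \ldots, \lambda_n)$. Then $A_\lambda(n)$, regarded as a function of $\lambda_1$, is a polynomial in $\lambda_1$ of degree $n-1$.
   Context: Six-vertex model: on an $r \times c$ grid there are $r$ horizontal lines and $c$ vertical lines meeting in $rc$ vertices. Each horizontal line consists of $c+1$ edges (the outermost ones are a left and a right boundary edge) and each vertical line of $r+1$ edges (the outermost ones are a top and a bottom boundary edge). A state assigns an orientation to every edge (left/right for horizontal edges, up/down for vertical edges), agreeing with prescribed orientations on the boundary edges, such that at every vertex exactly two of the four adjacent edges point into the vertex and two point out of it. For a partition $\lambda = (\lambda_1, \ldots, \lambda_n)$ (integers $\lambda_1 \geq \cdots \geq \lambda_n \geq 0$), $A_\lambda(n)$ is the number of states of the six-vertex model on the grid with $n$ rows and $n + \lambda_1$ columns with boundary conditions: all left boundary arrows point right, all right boundary arrows point left, all bottom boundary arrows point down, and, numbering the columns $1, 2, \ldots, n+\lambda_1$ from right to left, the top boundary arrow in column $i$ points up if $i \in \{\lambda_k + n + 1 - k : 1 \leq k \leq n\}$ and down otherwise. *)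

theory Defs
  imports Main "HOL-Computational_Algebra.Polynomial"
begin

text \<open>Six-vertex model on the grid with n rows and m = n + lam 1 columns.
Rows are indexed 0..n-1 from top to bottom, vertex columns 0..m-1 from left to right.
Horizontal edge  h i j  (row i, j = 0..m) lies immediately left of vertex (i,j);
h i j = True means the arrow points right.
Vertical edge  v k j  (column j, k = 0..n) lies immediately above vertex (k,j);
v k j = True means the arrow points up.
Edge values outside the grid are normalised to False so that states are counted exactly once.
The partition is lam 1, ..., lam n.  The paper numbers columns 1..m from right to left,
so paper column c corresponds to left-to-right index j = m - c.\<close>

definition top_up_cols :: "nat \<Rightarrow> (nat \<Rightarrow> nat) \<Rightarrow> nat set" where
  "top_up_cols n lam = {lam k + n + 1 - k | k. 1 \<le> k \<and> k \<le> n}"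

definition six_vertex_states ::
  "nat \<Rightarrow> (nat \<Rightarrow> nat) \<Rightarrow> ((nat \<Rightarrow> nat \<Rightarrow> bool) \<times> (nat \<Rightarrow> nat \<Rightarrow> bool)) set" where
  "six_vertex_states n lam = (let m = n + lam 1 in
     {(h, v). (\<forall>i j. (n \<le> i \<or> m < j) \<longrightarrow> \<not> h i j)
            \<and> (\<forall>k j. (n < k \<or> m \<le> j) \<longrightarrow> \<not> v k j)
            \<and> (\<forall>i<n. h i 0)
            \<and> (\<forall>i<n. \<not> h i m)
            \<and> (\<forall>j<m. \<not> v n j)
            \<and> (\<forall>j<m. v 0 j \<longleftrightarrow> m - j \<in> top_up_cols n lam)
            \<and> (\<forall>i<n. \<forall>j<m.
                 of_bool (h i j) + of_bool (\<not> h i (Suc j)) + of_bool (\<not> v i j)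
                 + of_bool (v (Suc i) j) = (2::nat))})"

definition A_lambda :: "(nat \<Rightarrow> nat) \<Rightarrow> nat \<Rightarrow> nat" where
  "A_lambda lam n = card (six_vertex_states n lam)"

end

theory Submission
  imports Defs
begin

primrec PP :: "nat \<Rightarrow> real poly" where
  "PP 0 = 1"
| "PP (Suc k) = PP k * [:real k, 1:]"

lemma poly_PP: "poly (PP k) x = pochhammer x k"
  by (induction k) (simp_all add: pochhammer_Suc algebra_simps)

lemma degree_PP: "degree (PP k) = k \<and> coeff (PP k) k = 1"
proof (induction k)
  case 0 then show ?case by simp
next
  case (Suc k)
  have nz: "PP k \<noteq> 0" using Suc by auto
  have "degree (PP k * [:real k, 1:]) = degree (PP k) + degree [:real k, 1:]"
    using nz by (intro degree_mult_eq) auto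
  then have "degree (PP (Suc k)) = Suc k"
    using Suc by simp
  moreover have "coeff (PP (Suc k)) (Suc k) = 1"
    using Suc coeff_mult_degree_sum[of "PP k" "[:real k, 1:]"] by simp
  ultimately show ?case by simp
qed

lemma delta_PP: "poly (PP (Suc k)) x - poly (PP (Suc k)) (x - 1) = real (Suc k) * poly (PP k) x"
proof -
  have "pochhammer (x - 1) (Suc k) = (x - 1) * pochhammer x k"
    using pochhammer_rec[of "x - 1" k] by simp
  then show ?thesis by (simp add: poly_PP pochhammer_Suc algebra_simps)
qed

lemma antider_step:
  assumes "degree Q \<le> e"
    and "\<forall>x. poly R' x - poly R' (x - 1) = poly (Q - smult (coeff Q e) (PP e)) x"
    and "degree R' \<le> e"
  shows "\<exists>R. (\<forall>x. poly R x - poly R (x - 1) = poly Q x) \<and> degree R \<le> Suc e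
            \<and> coeff R (Suc e) = coeff Q e / real (Suc e)"
proof -
  define c where "c = coeff Q e"
  define R where "R = smult (c / real (Suc e)) (PP (Suc e)) + R'"
  have "\<forall>x. poly R x - poly R (x - 1) = poly Q x"
  proof
    fix x :: real
    have "poly R x - poly R (x - 1) = c / real (Suc e) * (poly (PP (Suc e)) x - poly (PP (Suc e)) (x - 1))
           + (poly R' x - poly R' (x - 1))"
      by (simp add: R_def algebra_simps)
    also have "\<dots> = c * poly (PP e) x + (poly Q x - c * poly (PP e) x)"
      using assms(2) delta_PP[of e x] by (simp add: c_def)
    finally show "poly R x - poly R (x - 1) = poly Q x" by simp
  qed
  moreover have "degree R \<le> Suc e"
    unfolding R_def using assms(3) degree_PP[of "Suc e"]
    by (intro degree_add_le) (auto intro: order.trans[OF degree_smult_le])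
  moreover have "coeff R (Suc e) = c / real (Suc e)"
    using assms(3) degree_PP[of "Suc e"] by (simp add: R_def coeff_eq_0)
  ultimately show ?thesis unfolding c_def by blast
qed

lemma deg_drop:
  fixes p :: "real poly"
  assumes "degree p \<le> Suc e" "coeff p (Suc e) = 0" shows "degree p \<le> e"
proof (rule ccontr)
  assume "\<not> degree p \<le> e"
  then have "degree p = Suc e" using assms by simp
  then have "p = 0" using assms(2) by (metis leading_coeff_0_iff)
  then show False using \<open>degree p = Suc e\<close> by simp
qed

lemma antider:
  fixes Q :: "real poly"
  shows "degree Q \<le> e \<Longrightarrow> \<exists>R. (\<forall>x. poly R x - poly R (x - 1) = poly Q x) \<and> degree R \<le> Suc e
            \<and> coeff R (Suc e) = coeff Q e / real (Suc e)"
proof (induction e arbitrary: Q)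
  case 0
  have "Q - smult (coeff Q 0) (PP 0) = 0"
    using degree_0_id[of Q] 0 by (metis PP.simps(1) le_zero_eq diff_self smult_one)
  then show ?case using antider_step[OF 0, of 0] by simp
next
  case (Suc e)
  define Q' where "Q' = Q - smult (coeff Q (Suc e)) (PP (Suc e))"
  have "degree Q' \<le> Suc e"
    unfolding Q'_def using Suc.prems degree_PP[of "Suc e"]
    by (intro degree_diff_le) (auto intro: order.trans[OF degree_smult_le])
  moreover have "coeff Q' (Suc e) = 0" using degree_PP[of "Suc e"] by (simp add: Q'_def)
  ultimately have "degree Q' \<le> e" by (rule deg_drop)
  then obtain R' where "\<forall>x. poly R' x - poly R' (x - 1) = poly Q' x" "degree R' \<le> Suc e"
    using Suc.IH by (meson le_SucI)
  then show ?case using antider_step[OF Suc.prems, of R'] by (simp add: Q'_def)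
qed

lemma sum_poly:
  fixes Q :: "real poly"
  assumes "lead_coeff Q > 0"
  shows "\<exists>R. degree R = Suc (degree Q) \<and> lead_coeff R > 0 \<and>
     (\<forall>x::nat. a \<le> x \<longrightarrow> poly R (real x) = C + (\<Sum>y\<in>{a<..x}. poly Q (real y)))"
proof -
  obtain R0 where R0: "\<forall>x. poly R0 x - poly R0 (x - 1) = poly Q x" "degree R0 \<le> Suc (degree Q)"
    "coeff R0 (Suc (degree Q)) = lead_coeff Q / real (Suc (degree Q))"
    using antider[of Q "degree Q"] by auto
  have c0: "coeff R0 (Suc (degree Q)) > 0" using R0(3) assms by simp
  have dR0: "degree R0 = Suc (degree Q)"
    using R0(2) le_degree[of R0 "Suc (degree Q)"] c0 by simp
  define R where "R = R0 + [:C - poly R0 (real a):]"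
  have dR: "degree R = Suc (degree Q)" unfolding R_def
    using dR0 by (subst degree_add_eq_left) auto
  have lR: "lead_coeff R > 0" using dR c0 by (simp add: R_def dR0)
  have tel: "(\<Sum>y\<in>{a<..x}. poly Q (real y)) = poly R0 (real x) - poly R0 (real a)" if "a \<le> x" for x
    using that
  proof (induction x rule: dec_induct)
    case base then show ?case by simp
  next
    case (step x)
    have "{a<..Suc x} = insert (Suc x) {a<..x}" using step by auto
    then have "(\<Sum>y\<in>{a<..Suc x}. poly Q (real y)) = poly Q (real (Suc x)) + (\<Sum>y\<in>{a<..x}. poly Q (real y))"
      by simp
    also have "poly Q (real (Suc x)) = poly R0 (real (Suc x)) - poly R0 (real x)"
      using R0(1)[rule_format, of "real (Suc x)"] by simp
    finally show ?case using step by simp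
  qed
  show ?thesis using dR lR tel by (intro exI[of _ R]) (auto simp: R_def)
qed

lemma sum_polys:
  fixes p :: "'a \<Rightarrow> real poly"
  assumes "finite I" "I \<noteq> {}" "\<And>i. i \<in> I \<Longrightarrow> degree (p i) = d \<and> lead_coeff (p i) > 0"
  shows "degree (\<Sum>i\<in>I. p i) = d \<and> lead_coeff (\<Sum>i\<in>I. p i) > 0"
proof -
  have c: "coeff (\<Sum>i\<in>I. p i) d > 0"
    unfolding coeff_sum using assms by (intro sum_pos) auto
  have "degree (\<Sum>i\<in>I. p i) \<le> d" using assms by (intro degree_sum_le) auto
  moreover have "d \<le> degree (\<Sum>i\<in>I. p i)" using c by (intro le_degree) simp
  ultimately have "degree (\<Sum>i\<in>I. p i) = d" by (rule antisym)
  then show ?thesis using c by simp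
qed


definition cnd :: "nat set \<Rightarrow> nat set \<Rightarrow> nat \<Rightarrow> bool" where
  "cnd U B s \<longleftrightarrow> card (B \<inter> {..s}) \<le> card (U \<inter> {..s}) \<and> card (U \<inter> {..s}) \<le> card (B \<inter> {..s}) + 1"

definition interl :: "nat set \<Rightarrow> nat set \<Rightarrow> bool" where
  "interl U B \<longleftrightarrow> card U = card B + 1 \<and> (\<forall>s. cnd U B s)"

fun T :: "nat \<Rightarrow> nat set \<Rightarrow> nat" where
  "T 0 U = (if U = {} then 1 else 0)"
| "T (Suc k) U = (\<Sum>B\<in>{B. B \<subseteq> {1..Max U} \<and> interl U B}. T k B)"

lemma interl_le_Max:
  assumes "finite B" "interl U B" "b \<in> B" shows "b \<le> Max U"
proof (rule ccontr)
  assume "\<not> b \<le> Max U"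
  have fU: "finite U" "U \<noteq> {}" using assms(2) unfolding interl_def by (auto intro: card_ge_0_finite)
  have eqU: "U \<inter> {..b - 1} = U" using \<open>\<not> b \<le> Max U\<close> fU by (auto dest: Max_ge)
  moreover have "B \<inter> {..b - 1} \<subseteq> B - {b}" using \<open>\<not> b \<le> Max U\<close> by auto
  then have "card (B \<inter> {..b - 1}) \<le> card B - 1"
    using assms by (metis card_Diff_singleton card_mono finite_Diff)
  moreover have "card B \<ge> 1" using assms by (auto simp: Suc_le_eq card_gt_0_iff)
  moreover have "card (U \<inter> {..b - 1}) \<le> card (B \<inter> {..b - 1}) + 1"
    using assms(2) unfolding interl_def cnd_def by blast
  moreover have cU: "card U = card B + 1" using assms(2) unfolding interl_def by blast
  ultimately have "card U \<le> card B" using eqU by arith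
  then show False using cU by simp
qed

lemma Int_atMost_small: "(\<forall>z\<in>F. z < (x::nat)) \<Longrightarrow> s < x \<Longrightarrow> insert x F \<inter> {..s} = F \<inter> {..s}"
  by auto

lemma Int_atMost_big: "(\<forall>z\<in>F. z \<le> (s::nat)) \<Longrightarrow> F \<inter> {..s} = F"
  by auto

context
  fixes F :: "nat set" and x :: nat
  assumes fin: "finite F" and ne: "F \<noteq> {}" and xgt: "Max F < x"
begin

lemma allF: "\<forall>z\<in>F. z < x" using fin ne xgt by (meson Max_ge le_less_trans)

lemma LA:
  assumes "B \<subseteq> {..Max F}" "finite B"
  shows "interl (insert x F) B \<longleftrightarrow> (card B = card F \<and> (\<forall>s\<le>Max F. cnd F B s))"
proof
  assume H: "interl (insert x F) B"
  have "x \<notin> F" using allF by blast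
  then have "card (insert x F) = card F + 1" using fin by simp
  then have "card B = card F" using H unfolding interl_def by simp
  moreover have "cnd F B s" if "s \<le> Max F" for s
  proof -
    have "s < x" using that xgt by simp
    then show ?thesis using H Int_atMost_small[OF allF] unfolding interl_def cnd_def by metis
  qed
  ultimately show "card B = card F \<and> (\<forall>s\<le>Max F. cnd F B s)" by blast
next
  assume H: "card B = card F \<and> (\<forall>s\<le>Max F. cnd F B s)"
  have "x \<notin> F" using allF by blast
  then have cU: "card (insert x F) = card B + 1" using fin H by simp
  have "cnd (insert x F) B s" for s
  proof (cases "s \<le> Max F")
    case True
    then have "s < x" using xgt by simp
    then show ?thesis using H True Int_atMost_small[OF allF] unfolding cnd_def by metis
  next
    case False
    then have bB: "B \<inter> {..s} = B" using assms by auto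
    show ?thesis
    proof (cases "s < x")
      case True
      then have "insert x F \<inter> {..s} = F" using False fin ne by (auto dest: Max_ge[OF fin])
      then show ?thesis using bB H unfolding cnd_def by simp
    next
      case False2: False
      then have "insert x F \<inter> {..s} = insert x F" using \<open>\<not> s \<le> Max F\<close> allF by auto
      then show ?thesis using bB cU unfolding cnd_def by simp
    qed
  qed
  then show "interl (insert x F) B" using cU unfolding interl_def by blast
qed

lemma LB:
  assumes "finite B" "interl (insert x F) B" "y \<in> B" "Max F < y" "B \<subseteq> {1..x}"
  shows "B - {y} \<subseteq> {1..Max F} \<and> interl F (B - {y})"
proof -
  have "x \<notin> F" using allF by blast
  then have cU: "card (insert x F) = card F + 1" using fin by simp
  then have cB: "card B = card F" using assms(2) unfolding interl_def by simp
  have c1: "card (insert x F \<inter> {..Max F}) \<le> card (B \<inter> {..Max F}) + 1"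
    using assms(2) unfolding interl_def cnd_def by blast
  have "insert x F \<inter> {..Max F} = F" using xgt fin ne by (auto dest: Max_ge[OF fin] simp: not_le[symmetric])
  with c1 have c2: "card F \<le> card (B \<inter> {..Max F}) + 1" by simp
  have sub: "B - {y} \<subseteq> {..Max F}"
  proof
    fix z assume z: "z \<in> B - {y}"
    show "z \<in> {..Max F}"
    proof (rule ccontr)
      assume "z \<notin> {..Max F}"
      then have "insert y (insert z (B \<inter> {..Max F})) \<subseteq> B" using z assms(3) by auto
      moreover have "card (insert y (insert z (B \<inter> {..Max F}))) = card (B \<inter> {..Max F}) + 2"
        using \<open>z \<notin> {..Max F}\<close> assms(4) z assms(1) by auto
      ultimately have "card (B \<inter> {..Max F}) + 2 \<le> card B" using assms(1) by (metis card_mono)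
      then show False using c2 cB by simp
    qed
  qed
  have s1: "B - {y} \<subseteq> {1..Max F}"
  proof
    fix z assume "z \<in> B - {y}"
    then have "z \<in> {..Max F}" "z \<in> {1..x}" using sub assms(5) by blast+
    then show "z \<in> {1..Max F}" by simp
  qed
  have cG: "card F = card (B - {y}) + 1" using cB assms(1,3)
    by (metis One_nat_def Suc_pred add.right_neutral add_Suc_right card.remove card_gt_0_iff ex_in_conv)
  have "cnd F (B - {y}) s" for s
  proof (cases "s < y")
    case True
    then have "(B - {y}) \<inter> {..s} = B \<inter> {..s}" by auto
    moreover have "s < x" using True assms(5,3) by auto
    ultimately show ?thesis using assms(2) Int_atMost_small[OF allF] unfolding interl_def cnd_def by metis
  next
    case False
    then have "F \<inter> {..s} = F" using assms(4) fin ne by (auto dest: Max_ge[OF fin])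
    moreover have "(B - {y}) \<inter> {..s} = B - {y}" using sub False assms(4) by auto
    ultimately show ?thesis using cG unfolding cnd_def by simp
  qed
  then show ?thesis using s1 cG unfolding interl_def by blast
qed

lemma LC:
  assumes "G \<subseteq> {1..Max F}" "interl F G" "Max F < y" "y \<le> x"
  shows "insert y G \<subseteq> {1..x} \<and> interl (insert x F) (insert y G)"
proof -
  have fG: "finite G" using assms(1) finite_subset by blast
  have yG: "y \<notin> G" using assms(1,3) by auto
  have "x \<notin> F" using allF by blast
  then have cU: "card (insert x F) = card (insert y G) + 1" using fin fG yG assms(2)
    unfolding interl_def by simp
  have "cnd (insert x F) (insert y G) s" for s
  proof (cases "s < y")
    case True
    then have "insert y G \<inter> {..s} = G \<inter> {..s}" by auto
    moreover have "s < x" using True assms(4) by auto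
    ultimately show ?thesis using assms(2) Int_atMost_small[OF allF] unfolding interl_def cnd_def by metis
  next
    case False
    then have "insert y G \<inter> {..s} = insert y G" using assms(1,3) by auto
    moreover have "insert x F \<inter> {..s} = (if s < x then F else insert x F)"
      using False assms(3) allF by (auto dest: Max_ge[OF fin])
    ultimately show ?thesis using cU fG yG assms(2) unfolding cnd_def interl_def by auto
  qed
  moreover have "insert y G \<subseteq> {1..x}" using assms xgt by auto
  ultimately show ?thesis using cU unfolding interl_def by blast
qed

end


lemma T_decomp:
  assumes fin: "finite F" and ne: "F \<noteq> {}" and xgt: "Max F < x"
  shows "T (Suc k) (insert x F) =
     (\<Sum>B\<in>{B. B \<subseteq> {1..Max F} \<and> card B = card F \<and> (\<forall>s\<le>Max F. cnd F B s)}. T k B)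
     + (\<Sum>y\<in>{Max F<..x}. \<Sum>G\<in>{G. G \<subseteq> {1..Max F} \<and> interl F G}. T k (insert y G))"
proof -
  define A0 where "A0 = {B. B \<subseteq> {1..Max F} \<and> card B = card F \<and> (\<forall>s\<le>Max F. cnd F B s)}"
  define GG where "GG = {G. G \<subseteq> {1..Max F} \<and> interl F G}"
  define Y where "Y = {Max F<..x}"
  define g where "g = (\<lambda>(y::nat, G::nat set). insert y G)"
  define I where "I = {B. B \<subseteq> {1..x} \<and> interl (insert x F) B}"
  have allF: "\<forall>z\<in>F. z < x" using allF[OF fin ne xgt] .
  have MU: "Max (insert x F) = x" using fin ne xgt by simp
  have T1: "T (Suc k) (insert x F) = (\<Sum>B\<in>I. T k B)" using MU by (simp add: I_def)
  have I_eq: "I = A0 \<union> g ` (Y \<times> GG)"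
  proof (intro equalityI subsetI)
    fix B assume "B \<in> I"
    then have BI: "B \<subseteq> {1..x}" "interl (insert x F) B" by (auto simp: I_def)
    have fB: "finite B" using BI(1) finite_subset by blast
    show "B \<in> A0 \<union> g ` (Y \<times> GG)"
    proof (cases "B \<subseteq> {1..Max F}")
      case True
      then have "B \<subseteq> {..Max F}" by auto
      then show ?thesis using LA[OF fin ne xgt _ fB] BI True by (auto simp: A0_def)
    next
      case False
      then obtain y where y0: "y \<in> B" "y \<notin> {1..Max F}" by (meson subsetI)
      then have y: "y \<in> B" "\<not> y \<le> Max F" using BI(1) by auto
      then have "Max F < y" "y \<le> x" using BI(1) by auto
      then have "B - {y} \<in> GG" using LB[OF fin ne xgt fB BI(2) y(1) _ BI(1)] by (auto simp: GG_def)
      moreover have "B = g (y, B - {y})" using y by (auto simp: g_def)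
      moreover have "y \<in> Y" using \<open>Max F < y\<close> \<open>y \<le> x\<close> by (simp add: Y_def)
      ultimately show ?thesis by blast
    qed
  next
    fix B assume "B \<in> A0 \<union> g ` (Y \<times> GG)"
    then show "B \<in> I"
    proof
      assume "B \<in> A0"
      then have "B \<subseteq> {1..Max F}" "card B = card F \<and> (\<forall>s\<le>Max F. cnd F B s)" by (auto simp: A0_def)
      moreover have "finite B" using calculation(1) finite_subset by blast
      moreover have "B \<subseteq> {..Max F}" using calculation(1) by auto
      ultimately show "B \<in> I" using LA[OF fin ne xgt] xgt by (auto simp: I_def)
    next
      assume "B \<in> g ` (Y \<times> GG)"
      then obtain y G where "B = insert y G" "y \<in> Y" "G \<in> GG" by (auto simp: g_def)
      then show "B \<in> I" using LC[OF fin ne xgt, of G y] by (auto simp: I_def Y_def GG_def)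
    qed
  qed
  have finP: "finite (Pow {1..x})" by simp
  have fI: "finite I" by (rule finite_subset[OF _ finP]) (auto simp: I_def)
  have fA: "finite A0" using I_eq fI by auto
  have fG: "finite (g ` (Y \<times> GG))" using I_eq fI by auto
  have disj: "A0 \<inter> g ` (Y \<times> GG) = {}"
  proof (rule ccontr)
    assume "A0 \<inter> g ` (Y \<times> GG) \<noteq> {}"
    then obtain y G where "g (y, G) \<in> A0" "y \<in> Y" by blast
    then have "insert y G \<subseteq> {1..Max F}" "Max F < y" by (auto simp: A0_def g_def Y_def)
    then show False by auto
  qed
  have inj: "inj_on g (Y \<times> GG)"
  proof (rule inj_onI)
    fix a b assume a: "a \<in> Y \<times> GG" and b: "b \<in> Y \<times> GG" and e: "g a = g b"
    obtain y G where [simp]: "a = (y, G)" by (cases a)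
    obtain y' G' where [simp]: "b = (y', G')" by (cases b)
    have "y \<notin> G'" "y' \<notin> G" "y \<notin> G" "y' \<notin> G'" using a b by (auto simp: Y_def GG_def)
    then have "y = y'" using e by (auto simp: g_def)
    moreover have "G = G'"
    proof -
      have "G = insert y G - {y}" using \<open>y \<notin> G\<close> by simp
      also have "insert y G = insert y G'" using e \<open>y = y'\<close> by (simp add: g_def)
      also have "insert y G' - {y} = G'" using \<open>y' \<notin> G'\<close> \<open>y = y'\<close> by simp
      finally show ?thesis .
    qed
    ultimately show "a = b" by simp
  qed
  have fGG: "finite GG" by (rule finite_subset[of _ "Pow {1..Max F}"]) (auto simp: GG_def)
  have "(\<Sum>B\<in>I. T k B) = (\<Sum>B\<in>A0. T k B) + (\<Sum>B\<in>g ` (Y \<times> GG). T k B)"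
    unfolding I_eq by (rule sum.union_disjoint[OF fA fG disj])
  also have "(\<Sum>B\<in>g ` (Y \<times> GG). T k B) = (\<Sum>p\<in>Y \<times> GG. T k (g p))"
    by (rule sum.reindex[OF inj, unfolded comp_def])
  also have "\<dots> = (\<Sum>y\<in>Y. \<Sum>G\<in>GG. T k (insert y G))"
    by (simp add: g_def sum.cartesian_product prod.case_distrib)
  finally show ?thesis using T1 by (simp add: A0_def GG_def Y_def)
qed

lemma interl_drop_Max:
  assumes "finite F" "F \<noteq> {}" shows "interl F (F - {Max F})"
proof -
  have M: "Max F \<in> F" using assms by simp
  have c1: "card (F - {Max F}) = card F - 1" by (rule card_Diff_singleton[OF M])
  have c2: "card F > 0" using assms by (simp add: card_gt_0_iff)
  have c: "card F = card (F - {Max F}) + 1" using c1 c2 by simp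
  have "cnd F (F - {Max F}) s" for s
  proof (cases "s < Max F")
    case True
    then have "(F - {Max F}) \<inter> {..s} = F \<inter> {..s}" by auto
    then show ?thesis by (simp add: cnd_def)
  next
    case False
    then have "F \<inter> {..s} = F" "(F - {Max F}) \<inter> {..s} = F - {Max F}" using assms
      by (auto dest: Max_ge[OF assms(1)])
    then show ?thesis using c by (simp add: cnd_def)
  qed
  then show ?thesis using c by (simp add: interl_def)
qed

lemma poly_T:
  "finite F \<Longrightarrow> card F = d \<Longrightarrow> 0 \<notin> F \<Longrightarrow> \<exists>p::real poly. degree p = d \<and> lead_coeff p > 0 \<and>
     (\<forall>x. (\<forall>z\<in>F. z < x) \<longrightarrow> real (T (Suc d) (insert x F)) = poly p (real x))"
proof (induction d arbitrary: F)
  case 0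
  then have F0: "F = {}" by simp
  have "{B. B \<subseteq> {1..x} \<and> interl {x} B} = {{}}" for x
  proof (intro equalityI subsetI)
    fix B :: "nat set" assume "B \<in> {B. B \<subseteq> {1..x} \<and> interl {x} B}"
    then have "finite B" "card B = 0" using finite_subset by (auto simp: interl_def)
    then show "B \<in> {{}}" by simp
  next
    fix B :: "nat set" assume "B \<in> {{}}"
    moreover have "card ({x} \<inter> {..s}) \<le> 1" for s by (rule order.trans[OF card_mono[of "{x}"]]) auto
    ultimately show "B \<in> {B. B \<subseteq> {1..x} \<and> interl {x} B}" by (auto simp: interl_def cnd_def)
  qed
  then have "T (Suc 0) {x} = 1" for x by simp
  then show ?case using F0 by (intro exI[of _ 1]) simp
next
  case (Suc d)
  have fin: "finite F" and ne: "F \<noteq> {}" using Suc.prems by auto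
  define A0 where "A0 = {B. B \<subseteq> {1..Max F} \<and> card B = card F \<and> (\<forall>s\<le>Max F. cnd F B s)}"
  define GG where "GG = {G. G \<subseteq> {1..Max F} \<and> interl F G}"
  have fGG: "finite GG" by (rule finite_subset[of _ "Pow {1..Max F}"]) (auto simp: GG_def)
  have M: "Max F \<in> F" using fin ne by simp
  have "F - {Max F} \<subseteq> {1..Max F}"
  proof
    fix z assume "z \<in> F - {Max F}"
    then have "z \<in> F" by simp
    then have "z \<le> Max F" using Max_ge[OF fin] by blast
    moreover have "z \<noteq> 0" using \<open>z \<in> F\<close> Suc.prems(3) by metis
    ultimately show "z \<in> {1..Max F}" by simp
  qed
  then have "F - {Max F} \<in> GG" using interl_drop_Max[OF fin ne] by (simp add: GG_def)
  then have neG: "GG \<noteq> {}" by blast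
  have "\<forall>G\<in>GG. \<exists>p::real poly. degree p = d \<and> lead_coeff p > 0 \<and>
     (\<forall>x. (\<forall>z\<in>G. z < x) \<longrightarrow> real (T (Suc d) (insert x G)) = poly p (real x))"
  proof
    fix G assume G: "G \<in> GG"
    then have g1: "finite G" "G \<subseteq> {1..Max F}" "interl F G" using finite_subset by (auto simp: GG_def)
    have g2: "card G = d" using g1(3) Suc.prems(2) by (simp add: interl_def)
    have g3: "0 \<notin> G" using g1(2) by auto
    show "\<exists>p::real poly. degree p = d \<and> lead_coeff p > 0 \<and>
     (\<forall>x. (\<forall>z\<in>G. z < x) \<longrightarrow> real (T (Suc d) (insert x G)) = poly p (real x))"
      using Suc.IH[OF g1(1) g2 g3] by simp
  qed
  from bchoice[OF this] obtain pG where pG: "\<forall>G\<in>GG. degree (pG G) = d \<and> lead_coeff (pG G) > 0 \<and>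
     (\<forall>x. (\<forall>z\<in>G. z < x) \<longrightarrow> real (T (Suc d) (insert x G)) = poly (pG G) (real x))"
    by blast
  define Q where "Q = (\<Sum>G\<in>GG. pG G)"
  have pG1: "\<And>G. G \<in> GG \<Longrightarrow> degree (pG G) = d \<and> lead_coeff (pG G) > 0" using pG by blast
  have Qd: "degree Q = d \<and> lead_coeff Q > 0" unfolding Q_def
    by (rule sum_polys[OF fGG neG pG1])
  from sum_poly[of Q "Max F" "real (\<Sum>B\<in>A0. T (Suc d) B)"] Qd obtain R where R: "degree R = Suc (degree Q)" "lead_coeff R > 0"
    "\<forall>x::nat. Max F \<le> x \<longrightarrow> poly R (real x) = real (\<Sum>B\<in>A0. T (Suc d) B) + (\<Sum>y\<in>{Max F<..x}. poly Q (real y))"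
    by auto
  have "real (T (Suc (Suc d)) (insert x F)) = poly R (real x)" if x: "\<forall>z\<in>F. z < x" for x
  proof -
    have xgt: "Max F < x" using x M by blast
    have inner: "real (\<Sum>G\<in>GG. T (Suc d) (insert y G)) = poly Q (real y)" if "y \<in> {Max F<..x}" for y
    proof -
      have "real (T (Suc d) (insert y G)) = poly (pG G) (real y)" if "G \<in> GG" for G
      proof -
        have "\<forall>z\<in>G. z < y" using that \<open>y \<in> {Max F<..x}\<close> by (auto simp: GG_def)
        then show ?thesis using pG that by blast
      qed
      then show ?thesis by (simp add: Q_def poly_sum)
    qed
    have "real (T (Suc (Suc d)) (insert x F)) =
       real (\<Sum>B\<in>A0. T (Suc d) B) + (\<Sum>y\<in>{Max F<..x}. real (\<Sum>G\<in>GG. T (Suc d) (insert y G)))"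
      using T_decomp[OF fin ne xgt, of "Suc d"] by (simp add: A0_def GG_def)
    also have "\<dots> = real (\<Sum>B\<in>A0. T (Suc d) B) + (\<Sum>y\<in>{Max F<..x}. poly Q (real y))"
      using inner by simp
    also have "\<dots> = poly R (real x)" using R(3) xgt by simp
    finally show ?thesis .
  qed
  then show ?case using R Qd by (intro exI[of _ R]) auto
qed


definition rowok :: "nat \<Rightarrow> nat set \<Rightarrow> nat set \<Rightarrow> (nat \<Rightarrow> bool) \<Rightarrow> bool" where
  "rowok m U B r \<longleftrightarrow> r 0 \<and> \<not> r m \<and> (\<forall>j>m. \<not> r j) \<and>
     (\<forall>j<m. of_bool (r j) + of_bool (\<not> r (Suc j)) + of_bool (m - j \<notin> U) + of_bool (m - j \<in> B) = (2::nat))"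

definition PS :: "nat set \<Rightarrow> nat set \<Rightarrow> nat \<Rightarrow> int" where
  "PS U B s = int (card (U \<inter> {..s})) - int (card (B \<inter> {..s}))"

lemma card_Int_atMost_Suc:
  "finite U \<Longrightarrow> card (U \<inter> {..Suc s}) = card (U \<inter> {..s}) + of_bool (Suc s \<in> U)"
  by (simp add: atMost_Suc Int_insert_right)

lemma PS_Suc:
  "finite U \<Longrightarrow> finite B \<Longrightarrow> PS U B (Suc s) = PS U B s + of_bool (Suc s \<in> U) - of_bool (Suc s \<in> B)"
  by (simp add: PS_def card_Int_atMost_Suc)

lemma row_unique:
  assumes "rowok m U B r" "rowok m U B r'" shows "r = r'"
proof -
  have "r j = r' j" if "j \<le> m" for j
    using that
  proof (induction j)
    case 0 then show ?case using assms by (simp add: rowok_def)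
  next
    case (Suc j)
    then have "j < m" by simp
    then have "of_bool (r j) + of_bool (\<not> r (Suc j)) + of_bool (m - j \<notin> U) + of_bool (m - j \<in> B) = (2::nat)"
      "of_bool (r' j) + of_bool (\<not> r' (Suc j)) + of_bool (m - j \<notin> U) + of_bool (m - j \<in> B) = (2::nat)"
      using assms by (auto simp: rowok_def)
    moreover have "r j = r' j" using Suc by simp
    ultimately show ?case by (cases "r (Suc j)"; cases "r' (Suc j)") auto
  qed
  moreover have "r j = r' j" if "m < j" for j using that assms by (simp add: rowok_def)
  ultimately show ?thesis by (intro ext) (meson not_le)
qed

lemma row_PS:
  assumes U: "U \<subseteq> {1..m}" and B: "B \<subseteq> {1..m}" and r: "rowok m U B r"
  shows "t \<le> m \<Longrightarrow> int (of_bool (r (m - t))) = PS U B t"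
proof (induction t)
  case 0
  have "U \<inter> {..0} = {}" "B \<inter> {..0} = {}" using U B by auto
  then show ?case using r by (simp add: rowok_def PS_def)
next
  case (Suc t)
  have fU: "finite U" and fB: "finite B" using U B finite_subset by auto
  define j where "j = m - Suc t"
  have j: "j < m" "Suc j = m - t" "m - j = Suc t" using Suc.prems by (auto simp: j_def)
  have ice0: "of_bool (r j) + of_bool (\<not> r (Suc j)) + of_bool (m - j \<notin> U) + of_bool (m - j \<in> B) = (2::nat)"
    using r j(1) unfolding rowok_def by blast
  have ice: "of_bool (r j) + of_bool (\<not> r (m - t)) + of_bool (Suc t \<notin> U) + of_bool (Suc t \<in> B) = (2::nat)"
    using ice0 unfolding j(2) j(3) .
  have IH: "int (of_bool (r (m - t))) = PS U B t" using Suc by simp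
  have P: "PS U B (Suc t) = PS U B t + of_bool (Suc t \<in> U) - of_bool (Suc t \<in> B)" by (rule PS_Suc[OF fU fB])
  show ?case unfolding j_def[symmetric] using ice IH P
    by (cases "r j"; cases "r (m - t)"; cases "Suc t \<in> U"; cases "Suc t \<in> B") simp_all
qed

lemma row_interl:
  assumes U: "U \<subseteq> {1..m}" and B: "B \<subseteq> {1..m}" and r: "rowok m U B r"
  shows "interl U B"
proof -
  have fU: "finite U" and fB: "finite B" using U B finite_subset by auto
  have P01: "0 \<le> PS U B t \<and> PS U B t \<le> 1" if "t \<le> m" for t
    using row_PS[OF U B r that] by (cases "r (m - t)") auto
  have Pm: "PS U B m = 1" using row_PS[OF U B r, of m] r by (simp add: rowok_def)
  have big: "U \<inter> {..s} = U" "B \<inter> {..s} = B" if "m \<le> s" for s using that U B by auto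
  have cardU: "card U = card B + 1" using Pm big[of m] by (simp add: PS_def)
  have "cnd U B s" for s
  proof (cases "s \<le> m")
    case True
    then show ?thesis using P01[OF True] by (simp add: cnd_def PS_def)
  next
    case False
    then show ?thesis using big[of s] cardU by (simp add: cnd_def)
  qed
  then show ?thesis using cardU by (simp add: interl_def)
qed

lemma interl_row:
  assumes U: "U \<subseteq> {1..m}" and B: "B \<subseteq> {1..m}" and I: "interl U B"
  shows "rowok m U B (\<lambda>j. j \<le> m \<and> PS U B (m - j) = 1)"
proof -
  have fU: "finite U" and fB: "finite B" using U B finite_subset by auto
  have P01: "0 \<le> PS U B t \<and> PS U B t \<le> 1" for t
  proof -
    have "card (B \<inter> {..t}) \<le> card (U \<inter> {..t}) \<and> card (U \<inter> {..t}) \<le> card (B \<inter> {..t}) + 1"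
      using I unfolding interl_def cnd_def by blast
    then show ?thesis unfolding PS_def by linarith
  qed
  have big: "U \<inter> {..m} = U" "B \<inter> {..m} = B" using U B by auto
  have Pm: "PS U B m = 1" using I big by (simp add: PS_def interl_def)
  have z: "U \<inter> {..0} = {}" "B \<inter> {..0} = {}" using U B by auto
  have P0: "PS U B 0 = 0" using z by (simp add: PS_def)
  have ice: "of_bool (j \<le> m \<and> PS U B (m - j) = 1) + of_bool (\<not> (Suc j \<le> m \<and> PS U B (m - Suc j) = 1))
      + of_bool (m - j \<notin> U) + of_bool (m - j \<in> B) = (2::nat)" if "j < m" for j
  proof -
    define t where "t = m - Suc j"
    have j: "m - j = Suc t" "m - Suc j = t" using that by (auto simp: t_def)
    have P: "PS U B (Suc t) = PS U B t + of_bool (Suc t \<in> U) - of_bool (Suc t \<in> B)" by (rule PS_Suc[OF fU fB])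
    show ?thesis unfolding j using that P P01[of t] P01[of "Suc t"]
      by (cases "Suc t \<in> U"; cases "Suc t \<in> B"; cases "PS U B t = 1"; cases "PS U B (Suc t) = 1") auto
  qed
  show ?thesis unfolding rowok_def using Pm P0 ice by auto
qed


definition SV :: "nat \<Rightarrow> nat \<Rightarrow> nat set \<Rightarrow> ((nat \<Rightarrow> nat \<Rightarrow> bool) \<times> (nat \<Rightarrow> nat \<Rightarrow> bool)) set" where
  "SV k m U = {(h, v). (\<forall>i j. (k \<le> i \<or> m < j) \<longrightarrow> \<not> h i j)
            \<and> (\<forall>i j. (k < i \<or> m \<le> j) \<longrightarrow> \<not> v i j)
            \<and> (\<forall>i<k. h i 0)
            \<and> (\<forall>i<k. \<not> h i m)
            \<and> (\<forall>j<m. \<not> v k j)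
            \<and> (\<forall>j<m. v 0 j \<longleftrightarrow> m - j \<in> U)
            \<and> (\<forall>i<k. \<forall>j<m.
                 of_bool (h i j) + of_bool (\<not> h i (Suc j)) + of_bool (\<not> v i j)
                 + of_bool (v (Suc i) j) = (2::nat))}"

lemma six_SV: "six_vertex_states n lam = SV n (n + lam 1) (top_up_cols n lam)"
  unfolding six_vertex_states_def SV_def Let_def ..

definition pc :: "nat \<Rightarrow> nat \<Rightarrow> nat set \<Rightarrow> nat set \<Rightarrow> ((nat \<Rightarrow> nat \<Rightarrow> bool) \<times> (nat \<Rightarrow> nat \<Rightarrow> bool)) set" where
  "pc k m U B = {(h, v). (h, v) \<in> SV (Suc k) m U \<and> (\<forall>j<m. v 1 j \<longleftrightarrow> m - j \<in> B)}"

lemma state_row: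
  assumes "(h, v) \<in> pc k m U B" shows "rowok m U B (h 0)"
proof -
  have S: "(h, v) \<in> SV (Suc k) m U" and V1: "\<forall>j<m. v 1 j \<longleftrightarrow> m - j \<in> B" using assms by (auto simp: pc_def)
  have "of_bool (h 0 j) + of_bool (\<not> h 0 (Suc j)) + of_bool (m - j \<notin> U) + of_bool (m - j \<in> B) = (2::nat)"
    if "j < m" for j
  proof -
    have "of_bool (h 0 j) + of_bool (\<not> h 0 (Suc j)) + of_bool (\<not> v 0 j) + of_bool (v (Suc 0) j) = (2::nat)"
      using S that unfolding SV_def by blast
    moreover have "v 0 j \<longleftrightarrow> m - j \<in> U" using S that unfolding SV_def by blast
    moreover have "v (Suc 0) j \<longleftrightarrow> m - j \<in> B" using V1 that by simp
    ultimately show ?thesis by simp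
  qed
  moreover have "h 0 0" "\<not> h 0 m" "\<forall>j>m. \<not> h 0 j" using S unfolding SV_def by auto
  ultimately show ?thesis unfolding rowok_def by blast
qed

definition phi :: "((nat \<Rightarrow> nat \<Rightarrow> bool) \<times> (nat \<Rightarrow> nat \<Rightarrow> bool)) \<Rightarrow> ((nat \<Rightarrow> nat \<Rightarrow> bool) \<times> (nat \<Rightarrow> nat \<Rightarrow> bool))" where
  "phi s = (\<lambda>i j. fst s (Suc i) j, \<lambda>i j. snd s (Suc i) j)"

definition psi :: "nat \<Rightarrow> nat set \<Rightarrow> (nat \<Rightarrow> bool) \<Rightarrow> ((nat \<Rightarrow> nat \<Rightarrow> bool) \<times> (nat \<Rightarrow> nat \<Rightarrow> bool)) \<Rightarrow> ((nat \<Rightarrow> nat \<Rightarrow> bool) \<times> (nat \<Rightarrow> nat \<Rightarrow> bool))" where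
  "psi m U r s = (\<lambda>i j. if i = 0 then r j else fst s (i - 1) j,
                  \<lambda>i j. if i = 0 then j < m \<and> m - j \<in> U else snd s (i - 1) j)"

lemma phi_into:
  assumes "s \<in> pc k m U B" shows "phi s \<in> SV k m B"
proof -
  obtain h v where s: "s = (h, v)" by (cases s)
  have S: "(h, v) \<in> SV (Suc k) m U" and V1: "\<forall>j<m. v 1 j \<longleftrightarrow> m - j \<in> B" using assms s by (auto simp: pc_def)
  show ?thesis using S V1 unfolding s phi_def SV_def by auto
qed

lemma psi_into:
  assumes "rowok m U B r" "s \<in> SV k m B"
  shows "psi m U r s \<in> pc k m U B"
proof -
  obtain h v where s: "s = (h, v)" by (cases s)
  have S: "(h, v) \<in> SV k m B" using assms s by simp
  have R: "r 0" "\<not> r m" "\<forall>j>m. \<not> r j"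
    "\<forall>j<m. of_bool (r j) + of_bool (\<not> r (Suc j)) + of_bool (m - j \<notin> U) + of_bool (m - j \<in> B) = (2::nat)"
    using assms(1) unfolding rowok_def by blast+
  define h' where "h' = (\<lambda>i j. if i = 0 then r j else h (i - 1) j)"
  define v' where "v' = (\<lambda>i j. if i = 0 then j < m \<and> m - j \<in> U else v (i - 1) j)"
  have e: "psi m U r s = (h', v')" unfolding psi_def h'_def v'_def s by simp
  have S1: "\<forall>i j. (Suc k \<le> i \<or> m < j) \<longrightarrow> \<not> h' i j"
    using S R(3) unfolding SV_def h'_def by auto
  have S2: "\<forall>i j. (Suc k < i \<or> m \<le> j) \<longrightarrow> \<not> v' i j"
    using S unfolding SV_def v'_def by auto
  have S3: "\<forall>i<Suc k. h' i 0" using S R(1) unfolding SV_def h'_def by (auto simp: less_Suc_eq_0_disj)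
  have S4: "\<forall>i<Suc k. \<not> h' i m" using S R(2) unfolding SV_def h'_def by (auto simp: less_Suc_eq_0_disj)
  have S5: "\<forall>j<m. \<not> v' (Suc k) j" using S unfolding SV_def v'_def by auto
  have S6: "\<forall>j<m. v' 0 j \<longleftrightarrow> m - j \<in> U" unfolding v'_def by auto
  have S7: "of_bool (h' i j) + of_bool (\<not> h' i (Suc j)) + of_bool (\<not> v' i j) + of_bool (v' (Suc i) j) = (2::nat)"
    if "i < Suc k" "j < m" for i j
  proof (cases i)
    case 0
    have "v (0) j \<longleftrightarrow> m - j \<in> B" using S that unfolding SV_def by blast
    then show ?thesis using R(4) that 0 unfolding h'_def v'_def by auto
  next
    case (Suc i')
    have "of_bool (h i' j) + of_bool (\<not> h i' (Suc j)) + of_bool (\<not> v i' j) + of_bool (v (Suc i') j) = (2::nat)"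
      using S that Suc unfolding SV_def by blast
    then show ?thesis using Suc unfolding h'_def v'_def by simp
  qed
  have S8: "\<forall>j<m. v' 1 j \<longleftrightarrow> m - j \<in> B" using S unfolding SV_def v'_def by auto
  have "(h', v') \<in> SV (Suc k) m U"
    unfolding SV_def using S1 S2 S3 S4 S5 S6 S7 by blast
  then show ?thesis unfolding e pc_def using S8 by blast
qed

lemma piece_bij:
  assumes U: "U \<subseteq> {1..m}" and B: "B \<subseteq> {1..m}" and I: "interl U B"
  shows "bij_betw phi (pc k m U B) (SV k m B)"
proof -
  define r where "r = (\<lambda>j. j \<le> m \<and> PS U B (m - j) = 1)"
  have R: "rowok m U B r" unfolding r_def by (rule interl_row[OF U B I])
  show ?thesis
  proof (rule bij_betw_byWitness[where f' = "psi m U r"])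
    show "\<forall>a\<in>pc k m U B. psi m U r (phi a) = a"
    proof
      fix a assume a: "a \<in> pc k m U B"
      obtain h v where s: "a = (h, v)" by (cases a)
      have r0: "h 0 = r" using row_unique[OF state_row[OF a[unfolded s]] R] .
      have S: "(h, v) \<in> SV (Suc k) m U" using a s by (auto simp: pc_def)
      have v0: "v 0 j \<longleftrightarrow> j < m \<and> m - j \<in> U" for j
        using S unfolding SV_def by (cases "j < m") auto
      show "psi m U r (phi a) = a" unfolding s psi_def phi_def
        using r0 v0 by (auto intro!: ext)
    qed
    show "\<forall>a'\<in>SV k m B. phi (psi m U r a') = a'"
      by (auto simp: phi_def psi_def)
    show "phi ` pc k m U B \<subseteq> SV k m B" using phi_into by blast
    show "psi m U r ` SV k m B \<subseteq> pc k m U B" using psi_into[OF R] by blast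
  qed
qed

lemma piece_empty:
  assumes U: "U \<subseteq> {1..m}" and B: "B \<subseteq> {1..m}" and I: "\<not> interl U B"
  shows "pc k m U B = {}"
  using row_interl[OF U B state_row] I by auto


lemma SV_T:
  "U \<subseteq> {1..m} \<Longrightarrow> finite (SV k m U) \<and> card (SV k m U) = T k U"
proof (induction k arbitrary: U)
  case 0
  show ?case
  proof (cases "U = {}")
    case True
    have "SV 0 m U = {(\<lambda>_ _. False, \<lambda>_ _. False)}"
    proof (intro equalityI subsetI)
      fix s assume s: "s \<in> SV 0 m U"
      obtain h v where e: "s = (h, v)" by (cases s)
      have "h = (\<lambda>_ _. False)" using s e unfolding SV_def by (auto intro!: ext)
      moreover have "v = (\<lambda>_ _. False)"
      proof (intro ext)
        fix i j
        show "v i j = False" using s e unfolding SV_def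
          by (cases "0 < i"; cases "m \<le> j") auto
      qed
      ultimately show "s \<in> {(\<lambda>_ _. False, \<lambda>_ _. False)}" using e by simp
    next
      fix s assume "s \<in> {(\<lambda>_ _. False, \<lambda>_ _. False) :: (nat \<Rightarrow> nat \<Rightarrow> bool) \<times> (nat \<Rightarrow> nat \<Rightarrow> bool)}"
      then show "s \<in> SV 0 m U" using True unfolding SV_def by auto
    qed
    then show ?thesis using True by simp
  next
    case False
    then obtain c where c: "c \<in> U" by blast
    then have c1: "1 \<le> c" "c \<le> m" using "0.prems" by auto
    have "SV 0 m U = {}"
    proof (rule ccontr)
      assume "SV 0 m U \<noteq> {}"
      then obtain h v where s: "(h, v) \<in> SV 0 m U" by auto
      have "m - c < m" using c1 by simp
      then have "v 0 (m - c) \<longleftrightarrow> m - (m - c) \<in> U" "\<not> v 0 (m - c)" using s unfolding SV_def by auto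
      then show False using c c1 by simp
    qed
    then show ?thesis using False by simp
  qed
next
  case (Suc k)
  have U: "U \<subseteq> {1..m}" by fact
  define PB where "PB = Pow {1..m}"
  have fPB: "finite PB" by (simp add: PB_def)
  have cover: "SV (Suc k) m U = (\<Union>B\<in>PB. pc k m U B)"
  proof (intro equalityI subsetI)
    fix s assume s: "s \<in> SV (Suc k) m U"
    obtain h v where e: "s = (h, v)" by (cases s)
    define B where "B = {c. 1 \<le> c \<and> c \<le> m \<and> v 1 (m - c)}"
    have "\<forall>j<m. v 1 j \<longleftrightarrow> m - j \<in> B"
    proof (intro allI impI)
      fix j assume "j < m"
      then have "m - (m - j) = j" by simp
      then show "v 1 j \<longleftrightarrow> m - j \<in> B" using \<open>j < m\<close> by (auto simp: B_def)
    qed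
    then have "s \<in> pc k m U B" using s e by (simp add: pc_def)
    moreover have "B \<in> PB" by (auto simp: B_def PB_def)
    ultimately show "s \<in> (\<Union>B\<in>PB. pc k m U B)" by blast
  next
    fix s assume "s \<in> (\<Union>B\<in>PB. pc k m U B)"
    then show "s \<in> SV (Suc k) m U" by (auto simp: pc_def)
  qed
  have finpc: "finite (pc k m U B) \<and> card (pc k m U B) = (if interl U B then T k B else 0)" if "B \<in> PB" for B
  proof -
    have B: "B \<subseteq> {1..m}" using that by (simp add: PB_def)
    show ?thesis
    proof (cases "interl U B")
      case True
      have bij: "bij_betw phi (pc k m U B) (SV k m B)" by (rule piece_bij[OF U B True])
      have "finite (SV k m B) \<and> card (SV k m B) = T k B" by (rule Suc.IH[OF B])
      then show ?thesis using bij True by (metis bij_betw_finite bij_betw_same_card)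
    next
      case False
      then show ?thesis using piece_empty[OF U B False] by simp
    qed
  qed
  have disj: "\<forall>B\<in>PB. \<forall>B'\<in>PB. B \<noteq> B' \<longrightarrow> pc k m U B \<inter> pc k m U B' = {}"
  proof (intro ballI impI)
    fix B B' assume B: "B \<in> PB" and B': "B' \<in> PB" and ne: "B \<noteq> B'"
    show "pc k m U B \<inter> pc k m U B' = {}"
    proof (rule ccontr)
      assume "pc k m U B \<inter> pc k m U B' \<noteq> {}"
      then obtain h v where hv: "(h, v) \<in> pc k m U B" "(h, v) \<in> pc k m U B'" by auto
      have "\<forall>j<m. m - j \<in> B \<longleftrightarrow> m - j \<in> B'" using hv by (auto simp: pc_def)
      moreover have "c \<in> B \<longleftrightarrow> c \<in> B'" if "1 \<le> c" "c \<le> m" for c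
      proof -
        have "m - c < m" "m - (m - c) = c" using that by auto
        then show ?thesis using calculation by metis
      qed
      moreover have "B \<subseteq> {1..m}" "B' \<subseteq> {1..m}" using B B' by (auto simp: PB_def)
      ultimately have "B = B'" by auto
      then show False using ne by simp
    qed
  qed
  have fin: "finite (SV (Suc k) m U)" unfolding cover using fPB finpc by blast
  have "card (SV (Suc k) m U) = (\<Sum>B\<in>PB. card (pc k m U B))"
    unfolding cover by (rule card_UN_disjoint[OF fPB _ disj]) (use finpc in blast)
  also have "\<dots> = (\<Sum>B\<in>PB. if interl U B then T k B else 0)"
    using finpc by (intro sum.cong) auto
  also have "\<dots> = (\<Sum>B\<in>{B\<in>PB. interl U B}. T k B)"
    using fPB by (simp add: sum.inter_filter)
  also have "{B\<in>PB. interl U B} = {B. B \<subseteq> {1..Max U} \<and> interl U B}"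
  proof (cases "U = {}")
    case True then show ?thesis by (simp add: interl_def)
  next
    case False
    have fU: "finite U" using U finite_subset by blast
    have MU: "Max U \<le> m" using U fU False by auto
    show ?thesis
    proof (intro equalityI subsetI)
      fix B assume "B \<in> {B\<in>PB. interl U B}"
      then have B: "B \<subseteq> {1..m}" "interl U B" by (auto simp: PB_def)
      then have "finite B" using finite_subset by blast
      then have "b \<le> Max U" if "b \<in> B" for b using interl_le_Max B that by blast
      then show "B \<in> {B. B \<subseteq> {1..Max U} \<and> interl U B}" using B by auto
    next
      fix B assume "B \<in> {B. B \<subseteq> {1..Max U} \<and> interl U B}"
      then show "B \<in> {B\<in>PB. interl U B}" using MU by (auto simp: PB_def)
    qed
  qed
  finally show ?case using fin by simp
qed


theorem theorem3:
  fixes n :: nat and lam :: "nat \<Rightarrow> nat"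
  assumes "n \<ge> 1"
    and "\<And>k. 2 \<le> k \<Longrightarrow> k < n \<Longrightarrow> lam (Suc k) \<le> lam k"
  shows "\<exists>p :: real poly. degree p = n - 1 \<and>
           (\<forall>l1 :: nat. (n \<ge> 2 \<longrightarrow> lam 2 \<le> l1) \<longrightarrow>
              real (A_lambda (lam(1 := l1)) n) = poly p (real l1))"
proof -
  define f where "f = (\<lambda>k. lam k + n + 1 - k)"
  define F where "F = f ` {2..n}"
  have mono: "lam b \<le> lam a" if "2 \<le> a" "a \<le> b" "b \<le> n" for a b
    using that(2,3)
  proof (induction b rule: dec_induct)
    case base then show ?case by simp
  next
    case (step b)
    have "lam (Suc b) \<le> lam b" using assms(2)[of b] step that(1) by simp
    then show ?case using step by simp
  qed
  have fF: "finite F" by (simp add: F_def)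
  have inj: "inj_on f {2..n}"
  proof (rule inj_onI)
    fix a b assume a: "a \<in> {2..n}" and b: "b \<in> {2..n}" and e: "f a = f b"
    show "a = b"
    proof (rule ccontr)
      assume "a \<noteq> b"
      then consider "a < b" | "b < a" by linarith
      then show False
      proof cases
        case 1
        then have "lam b \<le> lam a" using mono a b by simp
        then have "f b < f a" using 1 a b by (simp add: f_def)
        then show False using e by simp
      next
        case 2
        then have "lam a \<le> lam b" using mono a b by simp
        then have "f a < f b" using 2 a b by (simp add: f_def)
        then show False using e by simp
      qed
    qed
  qed
  have cF: "card F = n - 1" unfolding F_def using card_image[OF inj] by simp
  have F0: "0 \<notin> F" by (auto simp: F_def f_def)
  obtain p where p: "degree p = n - 1" "lead_coeff p > 0"
    "\<forall>x. (\<forall>z\<in>F. z < x) \<longrightarrow> real (T (Suc (n - 1)) (insert x F)) = poly p (real x)"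
    using poly_T[OF fF cF F0] by blast
  define q where "q = pcompose p [:real n, 1:]"
  have "degree q = n - 1" unfolding q_def by (simp add: degree_pcompose p(1))
  moreover have "real (A_lambda (lam(1 := l1)) n) = poly q (real l1)"
    if l1: "n \<ge> 2 \<longrightarrow> lam 2 \<le> l1" for l1
  proof -
    have top: "top_up_cols n (lam(1 := l1)) = insert (l1 + n) F"
    proof (intro equalityI subsetI)
      fix c assume "c \<in> top_up_cols n (lam(1 := l1))"
      then obtain k where k: "c = (lam(1 := l1)) k + n + 1 - k" "1 \<le> k" "k \<le> n"
        unfolding top_up_cols_def by blast
      show "c \<in> insert (l1 + n) F"
      proof (cases "k = 1")
        case True then show ?thesis using k by simp
      next
        case False
        then have "c = f k" "k \<in> {2..n}" using k by (auto simp: f_def)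
        then show ?thesis by (auto simp: F_def)
      qed
    next
      fix c assume "c \<in> insert (l1 + n) F"
      then consider "c = l1 + n" | k where "k \<in> {2..n}" "c = f k" by (auto simp: F_def)
      then show "c \<in> top_up_cols n (lam(1 := l1))"
      proof cases
        case 1
        then have "c = (lam(1 := l1)) 1 + n + 1 - 1 \<and> 1 \<le> (1::nat) \<and> 1 \<le> n" using assms(1) by simp
        then show ?thesis unfolding top_up_cols_def by blast
      next
        case (2 k)
        then have "c = (lam(1 := l1)) k + n + 1 - k \<and> 1 \<le> k \<and> k \<le> n" by (auto simp: f_def)
        then show ?thesis unfolding top_up_cols_def by blast
      qed
    qed
    have bnd: "\<forall>z\<in>F. z < l1 + n"
    proof
      fix z assume "z \<in> F"
      then obtain k where k: "k \<in> {2..n}" "z = f k" by (auto simp: F_def)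
      then have "lam k \<le> lam 2" using mono[of 2 k] by simp
      moreover have "lam 2 \<le> l1" using l1 k by simp
      ultimately show "z < l1 + n" using k by (simp add: f_def) linarith
    qed
    have sub: "insert (l1 + n) F \<subseteq> {1..n + l1}"
    proof
      fix z assume "z \<in> insert (l1 + n) F"
      moreover have "z \<noteq> 0"
      proof
        assume "z = 0"
        with calculation F0 assms(1) show False by auto
      qed
      ultimately show "z \<in> {1..n + l1}" using bnd by fastforce
    qed
    have "A_lambda (lam(1 := l1)) n = card (SV n (n + l1) (insert (l1 + n) F))"
      unfolding A_lambda_def six_SV top by simp
    also have "\<dots> = T n (insert (l1 + n) F)" using SV_T[OF sub] by blast
    finally have "real (A_lambda (lam(1 := l1)) n) = real (T (Suc (n - 1)) (insert (l1 + n) F))"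
      using assms(1) by simp
    also have "\<dots> = poly p (real (l1 + n))" using p(3) bnd by blast
    also have "\<dots> = poly q (real l1)" by (simp add: q_def poly_pcompose add.commute)
    finally show ?thesis .
  qed
  ultimately show ?thesis by blast
qed

end
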